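(* Let $x\in\{0,1,2,3\}^n$. Let $x'$ be the subsequence of $x$ obtained by deleting all $1$'s and $3$'s, and $x''$ the subsequence obtained by deleting all $0$'s and $2$'s. If every maximal run of $0$'s in $x'$ and every maximal run of $3$'s in $x''$ has length at most $\log n+3$, then $x$ is regular.
   Context: Logarithms are base $2$. Define the weight $w:\{0,1,2,3\}\to\mathbb{R}$ by $w(0)=0$, $w(1)=1$, $w(2)=2\log n+11$, $w(3)=2\log n+12$. A string $x\in\{0,1,2,3\}^n$ is regular if for every symbol $a\in\{0,1,2,3\}$ and all $1\le j\le k\le n$ such that some $i\in[j,k]$ has $x_i\ne a$, it holds that $\sum_{i=j}^k (w(x_i)-w(a))\neq 0$. *)

theory Defs
  imports Complex_Main
begin

text \<open>Strings x in {0,1,2,3}^n are lists of naturals with entries in {0..3};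
  n is the length. Positions are 0-indexed (x_i for 1 <= i <= n is xs ! (i-1)).\<close>

definition wt :: "nat \<Rightarrow> nat \<Rightarrow> real" where
  "wt n a = (if a = 0 then 0 else if a = 1 then 1
             else if a = 2 then 2 * log 2 (real n) + 11
             else 2 * log 2 (real n) + 12)"

definition regular :: "nat list \<Rightarrow> bool" where
  "regular xs \<longleftrightarrow> (let n = length xs in
     \<forall>a \<in> {0..3::nat}. \<forall>j k. j \<le> k \<and> k < n \<and> (\<exists>i\<in>{j..k}. xs ! i \<noteq> a) \<longrightarrow>
       (\<Sum>i = j..k. wt n (xs ! i) - wt n a) \<noteq> 0)"

definition max_run :: "nat \<Rightarrow> nat list \<Rightarrow> nat \<Rightarrow> nat \<Rightarrow> bool" where
  "max_run a ys i l \<longleftrightarrow> 0 < l \<and> i + l \<le> length ys \<and>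
     (\<forall>t \<in> {i..<i+l}. ys ! t = a) \<and>
     (i = 0 \<or> ys ! (i - 1) \<noteq> a) \<and>
     (i + l = length ys \<or> ys ! (i + l) \<noteq> a)"

end

theory Submission
  imports Defs
begin

lemma run_to_max:
  assumes R: "\<forall>i l. max_run a zs i l \<longrightarrow> real l \<le> B"
  shows "zs = p @ replicate l a @ s \<Longrightarrow> 0 < l \<Longrightarrow> real l \<le> B"
proof (induction "length p + length s" arbitrary: p l s rule: less_induct)
  case less
  show ?case
  proof (cases "p \<noteq> [] \<and> last p = a")
    case True
    then have "p = butlast p @ [a]" by (metis append_butlast_last_id)
    then have "zs = butlast p @ replicate (Suc l) a @ s"
    proof -
      have "zs = (butlast p @ [a]) @ replicate l a @ s" using less.prems(1) \<open>p = butlast p @ [a]\<close> by simp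
      also have "\<dots> = butlast p @ replicate (Suc l) a @ s" by (simp add: replicate_append_same[symmetric])
      finally show ?thesis .
    qed
    moreover have "length (butlast p) + length s < length p + length s" using True by simp
    ultimately have "real (Suc l) \<le> B" using less.hyps by blast
    then show ?thesis by simp
  next
    case F1: False
    show ?thesis
    proof (cases "s \<noteq> [] \<and> hd s = a")
      case True
      then have "s = a # tl s" by (metis list.collapse)
      then have "zs = p @ replicate (Suc l) a @ tl s"
      proof -
        have "zs = p @ replicate l a @ a # tl s" using less.prems(1) \<open>s = a # tl s\<close> by simp
        also have "\<dots> = p @ replicate (Suc l) a @ tl s" by (simp add: replicate_app_Cons_same)
        finally show ?thesis .
      qed
      moreover have "length p + length (tl s) < length p + length s" using True by simp
      ultimately have "real (Suc l) \<le> B" using less.hyps by blast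
      then show ?thesis by simp
    next
      case F2: False
      have "max_run a zs (length p) l"
        unfolding max_run_def
      proof (intro conjI)
        show "0 < l" by fact
        show "length p + l \<le> length zs" using less.prems(1) by simp
        show "\<forall>t\<in>{length p..<length p + l}. zs ! t = a"
          using less.prems(1) by (auto simp: nth_append)
        show "length p = 0 \<or> zs ! (length p - 1) \<noteq> a"
        proof (cases "p = []")
          case False
          then have "zs ! (length p - 1) = last p"
            using less.prems(1) by (simp add: nth_append last_conv_nth)
          then show ?thesis using F1 False by simp
        qed simp
        show "length p + l = length zs \<or> zs ! (length p + l) \<noteq> a"
        proof (cases "s = []")
          case False
          then have "zs ! (length p + l) = hd s"
            using less.prems(1) by (simp add: nth_append hd_conv_nth)
          then show ?thesis using F2 False by simp
        qed (simp add: less.prems(1))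
      qed
      then show ?thesis using R by blast
    qed
  qed
qed

definition trail :: "nat \<Rightarrow> nat list \<Rightarrow> nat" where
  "trail a us = length (takeWhile (\<lambda>c. c = a) (rev us))"

lemma trail_decomp: "\<exists>q. us = q @ replicate (trail a us) a"
proof -
  have "rev us = takeWhile (\<lambda>c. c = a) (rev us) @ dropWhile (\<lambda>c. c = a) (rev us)" by simp
  moreover have "takeWhile (\<lambda>c. c = a) (rev us) = replicate (trail a us) a"
    unfolding trail_def by (metis (mono_tags) replicate_length_same set_takeWhileD)
  ultimately have "us = rev (dropWhile (\<lambda>c. c = a) (rev us)) @ replicate (trail a us) a"
    by (metis rev_append rev_replicate rev_rev_ident)
  then show ?thesis by blast
qed

lemma count_bound_aux:
  assumes B0: "0 \<le> B" and H: "\<forall>q r s. us = q @ replicate r a @ s \<longrightarrow> 0 < r \<longrightarrow> real r \<le> B"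
  shows "real (count_list us a) \<le> real (length (filter (\<lambda>c. c \<noteq> a) us)) * B + real (trail a us)"
  using H
proof (induction us rule: rev_induct)
  case Nil
  then show ?case by (simp add: trail_def)
next
  case (snoc x us)
  have H1: "\<forall>q r s. us = q @ replicate r a @ s \<longrightarrow> 0 < r \<longrightarrow> real r \<le> B"
    using snoc.prems by (metis append_assoc)
  note IH = snoc.IH[OF H1]
  show ?case
  proof (cases "x = a")
    case True
    then show ?thesis using IH by (simp add: trail_def)
  next
    case False
    obtain q where q: "us = q @ replicate (trail a us) a" using trail_decomp by blast
    have "real (trail a us) \<le> B"
    proof (cases "trail a us = 0")
      case True
      then show ?thesis using B0 by simp
    next
      case False
      then show ?thesis using H1 q by (metis append_Nil2 gr0I)
    qed
    then show ?thesis using IH False by (simp add: trail_def algebra_simps)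
  qed
qed

lemma seg_bound:
  assumes R: "\<forall>i l. max_run a zs i l \<longrightarrow> real l \<le> B" and B0: "0 \<le> B"
    and Z: "zs = p @ us @ s"
  shows "real (count_list us a) \<le> (real (length (filter (\<lambda>c. c \<noteq> a) us)) + 1) * B"
proof -
  have H: "\<forall>q r s'. us = q @ replicate r a @ s' \<longrightarrow> 0 < r \<longrightarrow> real r \<le> B"
  proof (intro allI impI)
    fix q r s' assume u: "us = q @ replicate r a @ s'" and r: "0 < r"
    have "zs = (p @ q) @ replicate r a @ (s' @ s)" using Z u by simp
    then show "real r \<le> B" using run_to_max[OF R] r by blast
  qed
  have T: "real (trail a us) \<le> B"
  proof (cases "trail a us = 0")
    case True then show ?thesis using B0 by simp
  next
    case False
    obtain q where q: "us = q @ replicate (trail a us) a" using trail_decomp by blast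
    then show ?thesis using H False by (metis append_Nil2 gr0I)
  qed
  have "real (count_list us a) \<le> real (length (filter (\<lambda>c. c \<noteq> a) us)) * B + real (trail a us)"
    using count_bound_aux[OF B0 H] .
  then show ?thesis using T by (simp add: algebra_simps)
qed

lemma sum_counts:
  fixes g :: "nat \<Rightarrow> real" and ys :: "nat list"
  shows "set ys \<subseteq> {0..3} \<Longrightarrow> sum_list (map g ys) =
    real (count_list ys 0) * g 0 + real (count_list ys 1) * g 1 + real (count_list ys 2) * g 2
    + real (count_list ys 3) * g 3"
proof (induction ys)
  case Nil then show ?case by simp
next
  case (Cons y ys)
  then have "y = 0 \<or> y = 1 \<or> y = 2 \<or> y = 3" by auto
  then show ?case using Cons by (elim disjE) (simp_all add: algebra_simps)
qed

lemma filt_counts1: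
  fixes ys :: "nat list"
  shows "set ys \<subseteq> {0..3} \<Longrightarrow> count_list (filter (\<lambda>c. c \<noteq> 1 \<and> c \<noteq> 3) ys) 0 = count_list ys 0
   \<and> length (filter (\<lambda>c. c \<noteq> 0) (filter (\<lambda>c. c \<noteq> 1 \<and> c \<noteq> 3) ys)) = count_list ys 2"
proof (induction ys)
  case Nil then show ?case by simp
next
  case (Cons y ys)
  then have "y = 0 \<or> y = 1 \<or> y = 2 \<or> y = 3" by auto
  then show ?case using Cons by (elim disjE) simp_all
qed

lemma filt_counts2:
  fixes ys :: "nat list"
  shows "set ys \<subseteq> {0..3} \<Longrightarrow> count_list (filter (\<lambda>c. c \<noteq> 0 \<and> c \<noteq> 2) ys) 3 = count_list ys 3
   \<and> length (filter (\<lambda>c. c \<noteq> 3) (filter (\<lambda>c. c \<noteq> 0 \<and> c \<noteq> 2) ys)) = count_list ys 1"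
proof (induction ys)
  case Nil then show ?case by simp
next
  case (Cons y ys)
  then have "y = 0 \<or> y = 1 \<or> y = 2 \<or> y = 3" by auto
  then show ?case using Cons by (elim disjE) simp_all
qed

lemma seg_sum:
  assumes "j \<le> k" "k < length xs"
  shows "(\<Sum>i = j..k. g (xs ! i)) = sum_list (map g (drop j (take (Suc k) xs)))"
proof -
  have "map (\<lambda>i. xs ! i) [j..<Suc k] = drop j (take (Suc k) xs)"
    using assms by (intro nth_equalityI) (simp_all del: upt_Suc)
  moreover have "(\<Sum>i = j..k. g (xs ! i)) = sum_list (map (\<lambda>i. g (xs ! i)) [j..<Suc k])"
    by (simp add: sum_set_upt_conv_sum_list_nat[symmetric] atLeastLessThanSuc_atLeastAtMost del: upt_Suc)
  moreover have "sum_list (map (\<lambda>i. g (xs ! i)) [j..<Suc k]) = sum_list (map g (map (\<lambda>i. xs ! i) [j..<Suc k]))"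
    by (simp only: map_map comp_def)
  ultimately show ?thesis by simp
qed

theorem lemma1:
  fixes xs :: "nat list"
  assumes "set xs \<subseteq> {0..3}"
    and "\<forall>i l. max_run 0 (filter (\<lambda>c. c \<noteq> 1 \<and> c \<noteq> 3) xs) i l
                \<longrightarrow> real l \<le> log 2 (real (length xs)) + 3"
    and "\<forall>i l. max_run 3 (filter (\<lambda>c. c \<noteq> 0 \<and> c \<noteq> 2) xs) i l
                \<longrightarrow> real l \<le> log 2 (real (length xs)) + 3"
  shows "regular xs"
  unfolding regular_def Let_def
proof (intro ballI allI impI)
  fix a j k
  assume a: "a \<in> {0..3::nat}" and jk: "j \<le> k \<and> k < length xs \<and> (\<exists>i\<in>{j..k}. xs ! i \<noteq> a)"
  define n where "n = length xs"
  define L where "L = log 2 (real n)"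
  have n1: "1 \<le> n" using jk n_def by simp
  have L0: "0 \<le> L" unfolding L_def using n1 by simp
  define seg where "seg = drop j (take (Suc k) xs)"
  have dec: "xs = take j xs @ seg @ drop (Suc k) xs"
  proof -
    have "take j (take (Suc k) xs) = take j xs" using jk by (simp add: min_def)
    then have "take (Suc k) xs = take j xs @ seg" unfolding seg_def
      by (metis append_take_drop_id)
    then show ?thesis by (metis append_assoc append_take_drop_id)
  qed
  have segset: "set seg \<subseteq> {0..3}" using assms(1) unfolding seg_def
    by (auto dest: in_set_dropD in_set_takeD)
  define c0 where "c0 = real (count_list seg 0)"
  define c1 where "c1 = real (count_list seg 1)"
  define c2 where "c2 = real (count_list seg 2)"
  define c3 where "c3 = real (count_list seg 3)"
  have nn: "0 \<le> c0" "0 \<le> c1" "0 \<le> c2" "0 \<le> c3" unfolding c0_def c1_def c2_def c3_def by auto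
  have S: "(\<Sum>i = j..k. wt n (xs ! i) - wt n a) =
      c0 * (wt n 0 - wt n a) + c1 * (wt n 1 - wt n a) + c2 * (wt n 2 - wt n a) + c3 * (wt n 3 - wt n a)"
    unfolding c0_def c1_def c2_def c3_def seg_def
    using seg_sum[of j k xs "\<lambda>v. wt n v - wt n a"] jk sum_counts[OF segset[unfolded seg_def]]
    by simp
  have w: "wt n 0 = 0" "wt n 1 = 1" "wt n 2 = 2 * L + 11" "wt n 3 = 2 * L + 12"
    unfolding wt_def L_def by auto
  obtain i where i: "i \<in> {j..k}" "xs ! i \<noteq> a" using jk by blast
  have "i - j < length seg" "seg ! (i - j) = xs ! i" unfolding seg_def using i jk by auto
  then have xi: "xs ! i \<in> set seg" by (metis nth_mem)
  define P1 where "P1 = (\<lambda>c::nat. c \<noteq> 1 \<and> c \<noteq> 3)"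
  define P2 where "P2 = (\<lambda>c::nat. c \<noteq> 0 \<and> c \<noteq> 2)"
  have B0: "0 \<le> L + 3" using L0 by simp
  have "filter P1 xs = filter P1 (take j xs) @ filter P1 seg @ filter P1 (drop (Suc k) xs)"
    by (subst dec) simp
  from seg_bound[OF assms(2)[folded n_def, folded L_def P1_def] B0 this]
  have b1: "c0 \<le> (c2 + 1) * (L + 3)"
    using filt_counts1[OF segset] unfolding c0_def c2_def P1_def by simp
  have "filter P2 xs = filter P2 (take j xs) @ filter P2 seg @ filter P2 (drop (Suc k) xs)"
    by (subst dec) simp
  from seg_bound[OF assms(3)[folded n_def, folded L_def P2_def] B0 this]
  have b2: "c3 \<le> (c1 + 1) * (L + 3)"
    using filt_counts2[OF segset] unfolding c3_def c1_def P2_def by simp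
  have ge1: "c \<ge> 1" if "c = real (count_list seg v)" "v \<in> set seg" for c v
    using that count_list_0_iff[of seg v] by simp
  have int: "c = 0 \<or> c \<ge> 1" if "c = real (count_list seg v)" for c v
    using that by (cases "count_list seg v") auto
  have xv: "xs ! i \<in> {0..3}" using xi segset by auto
  have some: "(a \<noteq> 0 \<and> c0 \<ge> 1) \<or> (a \<noteq> 1 \<and> c1 \<ge> 1) \<or> (a \<noteq> 2 \<and> c2 \<ge> 1) \<or> (a \<noteq> 3 \<and> c3 \<ge> 1)"
  proof -
    have "xs ! i = 0 \<or> xs ! i = 1 \<or> xs ! i = 2 \<or> xs ! i = 3" using xv by auto
    then show ?thesis using ge1[OF c0_def] ge1[OF c1_def] ge1[OF c2_def] ge1[OF c3_def] xi i(2)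
      by (elim disjE) auto
  qed
  have pr: "0 \<le> c0 * L" "0 \<le> c1 * L" "0 \<le> c2 * L" "0 \<le> c3 * L"
    using nn L0 by auto
  have pm: "1 \<le> c \<Longrightarrow> L \<le> L * c" for c
    using L0 mult_left_mono[of 1 c L] by simp
  have aa: "a = 0 \<or> a = 1 \<or> a = 2 \<or> a = 3" using a by auto
  have "c0 * (wt n 0 - wt n a) + c1 * (wt n 1 - wt n a) + c2 * (wt n 2 - wt n a) + c3 * (wt n 3 - wt n a) \<noteq> 0"
    using aa
  proof (elim disjE)
    assume "a = 0"
    then show ?thesis using w some nn pr by (simp add: algebra_simps; linarith)
  next
    assume "a = 3"
    then show ?thesis using w some nn pr by (simp add: algebra_simps; linarith)
  next
    assume "a = 1"
    then show ?thesis
    proof (cases "1 \<le> c2")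
      case True then show ?thesis using \<open>a = 1\<close> w some nn pr b1 pm[of c2] by (simp add: algebra_simps; linarith)
    next
      case False
      then have z: "c2 = 0" using int[OF c2_def] by auto
      show ?thesis
      proof (cases "1 \<le> c3")
        case True then show ?thesis using \<open>a = 1\<close> z w some nn pr b1 pm[of c3] by (simp add: algebra_simps; linarith)
      next
        case False
        then have "c3 = 0" using int[OF c3_def] by auto
        then show ?thesis using \<open>a = 1\<close> z w some nn pr b1 by (simp add: algebra_simps)
      qed
    qed
  next
    assume "a = 2"
    then show ?thesis
    proof (cases "1 \<le> c1")
      case True then show ?thesis using \<open>a = 2\<close> w some nn pr b2 pm[of c1] by (simp add: algebra_simps; linarith)
    next
      case False
      then have z: "c1 = 0" using int[OF c1_def] by auto
      show ?thesis
      proof (cases "1 \<le> c0")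
        case True then show ?thesis using \<open>a = 2\<close> z w some nn pr b2 pm[of c0] by (simp add: algebra_simps; linarith)
      next
        case False
        then have "c0 = 0" using int[OF c0_def] by auto
        then show ?thesis using \<open>a = 2\<close> z w some nn pr b2 by (simp add: algebra_simps)
      qed
    qed
  qed
  then show "(\<Sum>i = j..k. wt (length xs) (xs ! i) - wt (length xs) a) \<noteq> 0"
    using S n_def by simp
qed

end
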